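(* Let $d\geq1$, let $\mathcal{D}$ be a dyadic lattice in $\mathbb{R}^d$, and fix $j\in\{1,\dots,3^d\}$. Suppose $f,g,h$ are bounded compactly supported functions supported in a cube $\tilde{Q}\in\mathcal{D}$. Then, if $Q_0\in\mathcal{D}$ is a sufficiently large ancestor of $\tilde{Q}$, \[ \langle \mathcal{A}_{*,Q'}^j(f,g),h\rangle=0\quad\text{for all } Q'\in\mathcal{D} \text{ with } Q_0\subset Q'. \]
   Context: $d\sigma$ is the normalized surface measure on $S^{2d-1}\subset\mathbb{R}^d\times\mathbb{R}^d$ and $\mathcal{A}_t(f,g)(x)=\int_{S^{2d-1}} f(x-ty)g(x-tz)\,d\sigma(y,z)$. A dyadic lattice $\mathcal{D}$ is a collection of cubes with sidelengths $2^m$, $m\in\mathbb{Z}$, such that the cubes of each fixed sidelength partition $\mathbb{R}^d$ and each cube of sidelength $2^m$ is the union of $2^d$ cubes of $\mathcal{D}$ of sidelength $2^{m-1}$. For $Q\in\mathcal{D}$ with $\ell(Q)=2^m$, $\frac13Q$ is the concentric cube of sidelength $\ell(Q)/3$, and $(\frac13Q)(1),\dots,(\frac13Q)(3^d)$ is a fixed enumeration (by relative position) of the $3^d$ cubes of sidelength $\ell(Q)/3$ partitioning $Q$ into a $3\times\cdots\times3$ grid. Define $\mathcal{A}^j_{*,Q}(f,g)(x)=\sup_{t\in[2^{m-4},2^{m-3}]}\mathcal{A}_t(f\chi_{\frac13Q},g\chi_{(\frac13Q)(j)})(x)$. $\langle\cdot,\cdot\rangle$ is the $L^2$ pairing. 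*)

theory Defs
  imports "HOL-Analysis.Analysis"
begin

definition hcube :: "real^'n \<Rightarrow> real \<Rightarrow> (real^'n) set" where
  "hcube a l = {x. \<forall>i. a$i \<le> x$i \<and> x$i < a$i + l}"

definition dyadic_cube :: "(real^'n) set \<Rightarrow> int \<Rightarrow> bool" where
  "dyadic_cube Q m \<longleftrightarrow> (\<exists>a. Q = hcube a (2 powr of_int m))"

definition dyadic_lattice :: "(real^'n) set set \<Rightarrow> bool" where
  "dyadic_lattice D \<longleftrightarrow>
     (\<forall>Q\<in>D. \<exists>m::int. dyadic_cube Q m) \<and>
     (\<forall>m::int. \<forall>x. \<exists>!Q. Q \<in> D \<and> dyadic_cube Q m \<and> x \<in> Q) \<and>
     (\<forall>Q\<in>D. \<forall>m::int. dyadic_cube Q m \<longrightarrow>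
        (\<exists>C. C \<subseteq> D \<and> card C = 2 ^ CARD('n) \<and> (\<forall>Q'\<in>C. dyadic_cube Q' (m - 1)) \<and> \<Union>C = Q))"

text \<open>Normalized surface measure on the unit sphere of a Euclidean space, realised as the
  push-forward of normalized Lebesgue measure on the unit ball under radial projection.\<close>
definition sphere_measure :: "('a::euclidean_space) measure" where
  "sphere_measure = distr (uniform_measure lborel (ball 0 1)) borel (\<lambda>w. w /\<^sub>R norm w)"

definition sph_avg :: "real \<Rightarrow> (real^'n \<Rightarrow> real) \<Rightarrow> (real^'n \<Rightarrow> real) \<Rightarrow> real^'n \<Rightarrow> real" where
  "sph_avg t f g x =
     (\<integral>w. f (x - t *\<^sub>R fst w) * g (x - t *\<^sub>R snd w) \<partial>(sphere_measure :: ((real^'n) \<times> (real^'n)) measure))"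

text \<open>For Q = hcube a (2^m): the middle third (1/3)Q and the subcube at relative
  position k \<in> {0,1,2}^d of the 3x...x3 grid.\<close>
definition third_mid :: "real^'n \<Rightarrow> int \<Rightarrow> (real^'n) set" where
  "third_mid a m = hcube (\<chi> i. a$i + 2 powr of_int m / 3) (2 powr of_int m / 3)"

definition third_sub :: "real^'n \<Rightarrow> int \<Rightarrow> ('n \<Rightarrow> nat) \<Rightarrow> (real^'n) set" where
  "third_sub a m k = hcube (\<chi> i. a$i + real (k i) * (2 powr of_int m / 3)) (2 powr of_int m / 3)"

text \<open>Localized maximal operator A^j_{*,Q}(f,g)(x) for Q = hcube a (2^m), j given by position k.\<close>
definition loc_max :: "real^'n \<Rightarrow> int \<Rightarrow> ('n \<Rightarrow> nat) \<Rightarrow> (real^'n \<Rightarrow> real) \<Rightarrow> (real^'n \<Rightarrow> real) \<Rightarrow> real^'n \<Rightarrow> real" where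
  "loc_max a m k f g x =
     (SUP t\<in>{2 powr (of_int m - 4) .. 2 powr (of_int m - 3)}.
        sph_avg t (\<lambda>y. f y * indicator (third_mid a m) y) (\<lambda>y. g y * indicator (third_sub a m k) y) x)"

end

theory Submission
  imports Defs
begin

lemma sphere_AE_norm1:
  "AE v in (sphere_measure :: ('a::euclidean_space) measure). norm v = 1"
proof (rule AE_I')
  have meas: "(\<lambda>w::'a. w /\<^sub>R norm w) \<in> borel_measurable borel" by measurable
  have pre: "(\<lambda>w::'a. w /\<^sub>R norm w) -` (- sphere 0 1) = {0}"
    by (auto simp: norm_divide field_simps split: if_splits)
  have "emeasure (sphere_measure :: 'a measure) (- sphere 0 1)
      = emeasure (uniform_measure lborel (ball (0::'a) 1)) {0}"
    unfolding sphere_measure_def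
    by (subst emeasure_distr[OF _ ]) (use meas pre in auto)
  also have "\<dots> = 0"
    by (subst emeasure_uniform_measure) auto
  finally show "- sphere 0 1 \<in> null_sets (sphere_measure :: 'a measure)"
    unfolding sphere_measure_def by (auto simp: null_sets_def sphere_measure_def)
  show "{x \<in> space sphere_measure. \<not> norm x = 1} \<subseteq> - sphere 0 1" by auto
qed

lemma hcube_diff:
  fixes x y :: "real^'n"
  assumes "x \<in> hcube b L" "y \<in> hcube b L"
  shows "norm (x - y) < real CARD('n) * L"
proof -
  have "norm (x - y) \<le> (\<Sum>i\<in>UNIV. \<bar>(x - y)$i\<bar>)" by (rule norm_le_l1_cart)
  also have "\<dots> < (\<Sum>i\<in>(UNIV::'n set). L)"
    proof (rule sum_strict_mono)
    fix i :: 'n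
    show "\<bar>(x - y)$i\<bar> < L" using assms unfolding hcube_def
      by (auto simp: abs_less_iff) (smt (verit))+
  qed auto
  finally show ?thesis by simp
qed

lemma sph_zero:
  fixes F G :: "real^'n \<Rightarrow> real"
  assumes t: "0 < t" and x: "x \<in> hcube b L"
    and F: "\<forall>y. y \<notin> hcube b L \<longrightarrow> F y = 0"
    and G: "\<forall>y. y \<notin> hcube b L \<longrightarrow> G y = 0"
    and big: "2 * real CARD('n) * L \<le> t"
  shows "sph_avg t F G x = 0"
  unfolding sph_avg_def
proof (rule integral_eq_zero_AE)
  show "AE w in (sphere_measure :: ((real^'n) \<times> (real^'n)) measure).
          F (x - t *\<^sub>R fst w) * G (x - t *\<^sub>R snd w) = 0"
    using sphere_AE_norm1
  proof eventually_elim
    case (elim w)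
    obtain y z where w: "w = (y, z)" by (cases w)
    have "norm y ^ 2 + norm z ^ 2 = 1"
      using elim w by (simp add: norm_Pair)
    have yz: "norm y \<ge> 1/2 \<or> norm z \<ge> 1/2"
    proof (rule ccontr)
      assume "\<not> ?thesis"
      hence a: "norm y < 1/2" "norm z < 1/2" by auto
      have "norm y ^ 2 < (1/2)^2" by (rule power_strict_mono) (use a in auto)
      moreover have "norm z ^ 2 < (1/2)^2" by (rule power_strict_mono) (use a in auto)
      ultimately show False using \<open>norm y ^ 2 + norm z ^ 2 = 1\<close> by (simp add: power2_eq_square)
    qed
    have out: "x - t *\<^sub>R u \<notin> hcube b L" if "norm u \<ge> 1/2" for u :: "real^'n"
    proof
      assume "x - t *\<^sub>R u \<in> hcube b L"
      from hcube_diff[OF x this] have "norm (t *\<^sub>R u) < real CARD('n) * L" by simp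
      moreover have "norm (t *\<^sub>R u) = t * norm u" using t by simp
      moreover have "t * norm u \<ge> t / 2" using t that
        using mult_left_mono[OF that, of t] by simp
      ultimately show False using big by linarith
    qed
    from yz show ?case using out F G w by auto
  qed
qed

lemma hcube_side_mono:
  fixes c a :: "real^'n"
  assumes sub: "hcube c L \<subseteq> hcube a L'" and L: "0 < L" and L': "0 < L'"
  shows "L \<le> L'"
proof (rule ccontr)
  assume "\<not> L \<le> L'"
  hence lt: "L' < L" by simp
  let ?p = "(\<chi> i. c$i + L') :: real^'n"
  have "c \<in> hcube c L" using L by (simp add: hcube_def)
  hence c: "c \<in> hcube a L'" using sub by auto
  have "?p \<in> hcube c L" using L' lt by (simp add: hcube_def)
  hence "?p \<in> hcube a L'" using sub by auto
  then obtain i :: 'n where True by auto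
  from c \<open>?p \<in> hcube a L'\<close> have "a$i \<le> c$i" "c$i + L' < a$i + L'"
    by (auto simp: hcube_def)
  thus False by simp
qed

lemma big_enough:
  fixes mt m :: int
  assumes "mt + 5 + int N \<le> m"
  shows "2 * real N * 2 powr mt \<le> 2 powr (of_int m - 4)"
proof -
  have "real N \<le> 2 powr real N"
    using less_exp[of N] by (simp add: powr_realpow)
  have "2 * real N * 2 powr mt \<le> 2 * 2 powr real N * 2 powr mt"
    using \<open>real N \<le> 2 powr real N\<close> by simp
  also have "\<dots> = 2 powr (real_of_int mt + 1 + real N)"
    by (simp add: powr_add)
  also have "\<dots> \<le> 2 powr (of_int m - 4)"
    by (rule powr_mono) (use assms in auto)
  finally show ?thesis .
qed

theorem lemma4p1:
  fixes D :: "(real^'n) set set" and k :: "'n \<Rightarrow> nat"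
    and f g h :: "real^'n \<Rightarrow> real" and Qt :: "(real^'n) set"
  assumes "dyadic_lattice D"
    and "\<forall>i. k i < 3"
    and "f \<in> borel_measurable lborel" "g \<in> borel_measurable lborel" "h \<in> borel_measurable lborel"
    and "bounded (range f)" "bounded (range g)" "bounded (range h)"
    and "Qt \<in> D"
    and "\<forall>x. x \<notin> Qt \<longrightarrow> f x = 0" "\<forall>x. x \<notin> Qt \<longrightarrow> g x = 0" "\<forall>x. x \<notin> Qt \<longrightarrow> h x = 0"
  shows "\<exists>M::int. \<forall>Q0\<in>D. \<forall>m0. dyadic_cube Q0 m0 \<and> Qt \<subseteq> Q0 \<and> M \<le> m0 \<longrightarrow>
           (\<forall>Q'\<in>D. \<forall>a m. Q' = hcube a (2 powr of_int m) \<and> Q0 \<subseteq> Q' \<longrightarrow>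
              has_bochner_integral lborel (\<lambda>x. loc_max a m k f g x * h x) 0)"
proof -
  obtain mt where "dyadic_cube Qt mt" using assms(1,9) unfolding dyadic_lattice_def by blast
  then obtain b where Qt: "Qt = hcube b (2 powr of_int mt)" unfolding dyadic_cube_def by blast
  show ?thesis
  proof (intro exI[of _ "mt + 5 + int CARD('n)"] ballI allI impI, elim conjE)
    fix Q0 m0 Q' and a :: "real^'n" and m
    assume "dyadic_cube Q0 m0" "mt + 5 + int CARD('n) \<le> m0"
      and Q': "Q' = hcube a (2 powr of_int m)" and "Q0 \<subseteq> Q'"
    then obtain c where "Q0 = hcube c (2 powr of_int m0)" unfolding dyadic_cube_def by blast
    have "(2::real) powr of_int m0 \<le> 2 powr of_int m"
      by (rule hcube_side_mono[where c=c and a=a]) (use \<open>Q0 \<subseteq> Q'\<close> Q' \<open>Q0 = _\<close> in auto)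
    hence "m0 \<le> m" by simp
    hence big: "2 * real CARD('n) * 2 powr mt \<le> 2 powr (of_int m - 4)"
      using big_enough[of mt "CARD('n)" m] \<open>mt + 5 + int CARD('n) \<le> m0\<close> by simp
    have "loc_max a m k f g x * h x = 0" for x
    proof (cases "x \<in> Qt")
      case False thus ?thesis using assms(12) by simp
    next
      case True
      have "loc_max a m k f g x = (SUP t\<in>{(2::real) powr (of_int m - 4) .. 2 powr (of_int m - 3)}. (0::real))"
        unfolding loc_max_def
      proof (rule SUP_cong[OF refl])
        fix t assume t: "t \<in> {(2::real) powr (of_int m - 4) .. 2 powr (of_int m - 3)}"
        have "0 < (2::real) powr (of_int m - 4)" by simp
        hence "0 < t" using t by (simp del: powr_gt_zero)
        show "sph_avg t (\<lambda>y. f y * indicator (third_mid a m) y) (\<lambda>y. g y * indicator (third_sub a m k) y) x = 0"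
          by (rule sph_zero[where b=b and L="2 powr of_int mt"])
             (use \<open>0 < t\<close> True Qt assms(10,11) big t in auto)
      qed
      also have "\<dots> = 0" by (rule cSUP_const) simp
      finally show ?thesis by simp
    qed
    hence "(\<lambda>x. loc_max a m k f g x * h x) = (\<lambda>x. 0)" by auto
    thus "has_bochner_integral lborel (\<lambda>x. loc_max a m k f g x * h x) 0"
      by (simp add: has_bochner_integral_zero)
  qed
qed

end
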